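(* Let $c$ be a prime of the form $2^r\cdot 3+1$ ($r\ge1$), and let $a,b>1$ be integers with $a,b,c$ pairwise coprime and $e_c(b)=3$. Suppose positive integers $z,Y,Z$ with $z\le Z$ and $Y\equiv 4\pmod 6$ satisfy $a+b=c^z$ and $a+b^Y=c^Z$, and let $e=\nu_c((Y-1)/3)$. Then \[ c^z(2b+1)+(Y-1)(b^2+b+1)\equiv 0\pmod{c^{2(z-e)}}. \]
   Context: For a positive integer $M$ and an integer $A$ coprime to $M$, $e_M(A)$ denotes the least positive integer $e$ such that $A^e\equiv \pm1\pmod M$. $\nu_c$ is the $c$-adic valuation. *)

theory Defs
  imports "HOL-Number_Theory.Number_Theory"
begin

definition pm_ord :: "int \<Rightarrow> int \<Rightarrow> nat" where
  "pm_ord M A = (LEAST e. 0 < e \<and> ([A ^ e = 1] (mod M) \<or> [A ^ e = -1] (mod M)))"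

end

theory Submission
  imports Defs
begin

lemma pow_sub1_dvd: "(x::int) - 1 dvd x ^ n - 1"
proof (induction n)
  case 0 then show ?case by simp
next
  case (Suc n)
  have "x ^ Suc n - 1 = x * (x ^ n - 1) + (x - 1)" by (simp add: algebra_simps)
  show ?case unfolding \<open>x ^ Suc n - 1 = x * (x ^ n - 1) + (x - 1)\<close> by (intro dvd_add dvd_mult Suc) simp
qed

lemma lemA:
  fixes x q :: int
  assumes "q dvd x - 1"
  shows "q ^ 2 dvd x ^ n - 1 - int n * (x - 1)"
proof (induction n)
  case 0 then show ?case by simp
next
  case (Suc n)
  have e: "x ^ Suc n - 1 - int (Suc n) * (x - 1) = (x ^ n - 1 - int n * (x - 1)) + (x - 1) * (x ^ n - 1)"
    by (simp add: algebra_simps)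
  have "q dvd x ^ n - 1" using assms pow_sub1_dvd dvd_trans by blast
  then have h: "q ^ 2 dvd (x - 1) * (x ^ n - 1)" using assms by (simp add: power2_eq_square mult_dvd_mono)
  show ?case unfolding e by (intro dvd_add Suc h)
qed

lemma lemC:
  fixes x :: int
  shows "(x - 1) ^ 3 dvd 2 * (x ^ n - 1 - int n * (x - 1)) - int n * (int n - 1) * (x - 1) ^ 2"
proof (induction n)
  case 0 then show ?case by simp
next
  case (Suc n)
  have e: "2 * (x ^ Suc n - 1 - int (Suc n) * (x - 1)) - int (Suc n) * (int (Suc n) - 1) * (x - 1) ^ 2
     = (2 * (x ^ n - 1 - int n * (x - 1)) - int n * (int n - 1) * (x - 1) ^ 2) + 2 * (x - 1) * (x ^ n - 1 - int n * (x - 1))"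
    by (simp add: algebra_simps power2_eq_square)
  have "(x - 1) ^ 2 dvd x ^ n - 1 - int n * (x - 1)" using lemA[of "x - 1" x n] by simp
  then have "(x - 1) ^ 3 dvd 2 * (x - 1) * (x ^ n - 1 - int n * (x - 1))"
    by (metis mult.commute mult_dvd_mono power_Suc dvd_triv_right mult.assoc numeral_3_eq_3 numeral_2_eq_2)
  then show ?case unfolding e by (intro dvd_add Suc)
qed

lemma lemB:
  fixes x c :: int and s :: nat
  assumes "prime c" "c > 2" "s \<ge> 1" "c ^ s dvd x - 1"
  shows "c ^ (2 * s + 1) dvd x ^ nat c - 1 - c * (x - 1)"
proof -
  define D where "D = x - 1"
  have cn: "int (nat c) = c" using assms by simp
  from lemC[of x "nat c"] obtain t where t:
    "2 * (x ^ nat c - 1 - c * D) - c * (c - 1) * D ^ 2 = D ^ 3 * t"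
    unfolding D_def cn by (auto elim!: dvdE)
  obtain w where w: "D = c ^ s * w" using assms(4) D_def by (auto elim!: dvdE)
  have "D ^ 3 = c ^ (3 * s) * w ^ 3" using w by (simp add: power_mult_distrib power_mult[symmetric] mult.commute)
  moreover have "c ^ (2 * s + 1) dvd c ^ (3 * s)" using assms(3) by (intro le_imp_power_dvd) simp
  ultimately have d1: "c ^ (2 * s + 1) dvd D ^ 3 * t" by simp
  have "c * (c - 1) * D ^ 2 = c ^ (2 * s + 1) * ((c - 1) * w ^ 2)" using w
    by (simp add: power_mult_distrib power_mult[symmetric] algebra_simps)
  then have d2: "c ^ (2 * s + 1) dvd c * (c - 1) * D ^ 2" by (rule dvdI)
  have "c ^ (2 * s + 1) dvd 2 * (x ^ nat c - 1 - c * D)"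
  proof -
    have "2 * (x ^ nat c - 1 - c * D) = D ^ 3 * t + c * (c - 1) * D ^ 2" using t by simp
    then show ?thesis using d1 d2 by simp
  qed
  moreover have "coprime (c ^ (2 * s + 1)) 2"
  proof -
    have "\<not> c dvd 2" using assms(2) by (auto dest: zdvd_imp_le)
    then have "coprime c 2" using assms(1) prime_imp_coprime by blast
    then show ?thesis by simp
  qed
  ultimately show ?thesis unfolding D_def using coprime_dvd_mult_right_iff by blast
qed

lemma lemD:
  fixes x c :: int and s j :: nat
  assumes "prime c" "c > 2" "s \<ge> 1" "c ^ s dvd x - 1"
  shows "c ^ (2 * s + j) dvd x ^ (nat c ^ j) - 1 - c ^ j * (x - 1)"
proof (induction j)
  case 0 then show ?case by simp
next
  case (Suc j)
  define y where "y = x ^ (nat c ^ j)"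
  obtain t where t: "y - 1 - c ^ j * (x - 1) = c ^ (2 * s + j) * t" using Suc unfolding y_def by (auto elim!: dvdE)
  obtain w where w: "x - 1 = c ^ s * w" using assms(4) by (auto elim!: dvdE)
  have pp: "c ^ (2 * s + j) = c ^ (s + j) * c ^ s" by (simp add: power_add mult_2)
  have yy: "y - 1 = c ^ (s + j) * (w + c ^ s * t)" using t w unfolding pp by (simp add: power_add algebra_simps)
  then have "c ^ (s + j) dvd y - 1" by simp
  from lemB[OF assms(1,2) _ this] have b: "c ^ (2 * (s + j) + 1) dvd y ^ nat c - 1 - c * (y - 1)" using assms(3) by simp
  have "c ^ (2 * s + Suc j) dvd c ^ (2 * (s + j) + 1)" by (intro le_imp_power_dvd) simp
  with b have b2: "c ^ (2 * s + Suc j) dvd y ^ nat c - 1 - c * (y - 1)" using dvd_trans by blast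
  have yv: "y - 1 = c ^ j * (x - 1) + c ^ (2 * s + j) * t" using t by simp
  have "c * (y - 1) - c ^ Suc j * (x - 1) = c ^ (2 * s + Suc j) * t" unfolding yv by (simp add: algebra_simps)
  then have b3: "c ^ (2 * s + Suc j) dvd c * (y - 1) - c ^ Suc j * (x - 1)" by simp
  have "y ^ nat c = x ^ (nat c ^ Suc j)" unfolding y_def by (simp add: power_mult[symmetric] mult.commute)
  then have sum: "x ^ (nat c ^ Suc j) - 1 - c ^ Suc j * (x - 1) = (y ^ nat c - 1 - c * (y - 1)) + (c * (y - 1) - c ^ Suc j * (x - 1))"
    by simp
  show ?case unfolding sum by (rule dvd_add[OF b2 b3])
qed

lemma lemE:
  fixes x c :: int and s e :: nat and k' :: nat
  assumes "prime c" "c > 2" "s \<ge> 1" "c ^ s dvd x - 1"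
  shows "c ^ (2 * s + e) dvd x ^ (nat c ^ e * k') - 1 - c ^ e * int k' * (x - 1)"
proof -
  define y where "y = x ^ (nat c ^ e)"
  obtain t where t: "y - 1 - c ^ e * (x - 1) = c ^ (2 * s + e) * t" using lemD[OF assms, of e] unfolding y_def by (auto elim!: dvdE)
  obtain w where w: "x - 1 = c ^ s * w" using assms(4) by (auto elim!: dvdE)
  have pp: "c ^ (2 * s + e) = c ^ (s + e) * c ^ s" by (simp add: power_add mult_2)
  have yy: "y - 1 = c ^ (s + e) * (w + c ^ s * t)" using t w unfolding pp by (simp add: power_add algebra_simps)
  then have "c ^ (s + e) dvd y - 1" by simp
  from lemA[OF this, of k'] have b: "c ^ (2 * s + 2 * e) dvd y ^ k' - 1 - int k' * (y - 1)"
    by (simp add: power_mult[symmetric] mult.commute)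
  have "c ^ (2 * s + e) dvd c ^ (2 * s + 2 * e)" by (intro le_imp_power_dvd) simp
  with b have b2: "c ^ (2 * s + e) dvd y ^ k' - 1 - int k' * (y - 1)" using dvd_trans by blast
  have yv: "y - 1 = c ^ e * (x - 1) + c ^ (2 * s + e) * t" using t by simp
  have "int k' * (y - 1) - c ^ e * int k' * (x - 1) = c ^ (2 * s + e) * (int k' * t)" unfolding yv by (simp add: algebra_simps)
  then have b3: "c ^ (2 * s + e) dvd int k' * (y - 1) - c ^ e * int k' * (x - 1)" by simp
  have "y ^ k' = x ^ (nat c ^ e * k')" unfolding y_def by (simp add: power_mult)
  then have sum: "x ^ (nat c ^ e * k') - 1 - c ^ e * int k' * (x - 1) = (y ^ k' - 1 - int k' * (y - 1)) + (int k' * (y - 1) - c ^ e * int k' * (x - 1))"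
    by simp
  show ?thesis unfolding sum by (rule dvd_add[OF b2 b3])
qed


lemma cong_dvd_iff_int: "[(x::int) = y] (mod m) \<longleftrightarrow> m dvd x - y"
  by (metis cong_0_iff cong_diff_iff_cong_0)

theorem mainTheorem11:
  fixes a b c :: int and r z Y Z :: nat
  assumes "prime c" and "r \<ge> 1" and "c = 2 ^ r * 3 + 1"
    and "a > 1" and "b > 1"
    and "coprime a b" and "coprime a c" and "coprime b c"
    and "pm_ord c b = 3"
    and "z > 0" and "Y > 0" and "Z > 0" and "z \<le> Z"
    and "Y mod 6 = 4"
    and "a + b = c ^ z" and "a + b ^ Y = c ^ Z"
  shows "[c ^ z * (2 * b + 1) + (int Y - 1) * (b ^ 2 + b + 1) = 0]
           (mod c ^ (2 * (z - multiplicity c ((int Y - 1) div 3))))"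
proof -
  have "(2::int) ^ r \<ge> 2 ^ 1" using assms(2) by (intro power_increasing) auto
  then have c7: "c \<ge> 7" using assms(3) by simp
  define q where "q = Y div 6"
  have Yq: "Y = 6 * q + 4" using assms(14) unfolding q_def by presburger
  define k where "k = 2 * q + 1"
  have Yk: "Y = 3 * k + 1" using Yq k_def by simp
  have kdiv: "(int Y - 1) div 3 = int k" using Yk by simp
  have Ym: "int Y - 1 = 3 * int k" using Yk by simp
  have kodd: "odd k" using k_def by simp
  have kpos: "k > 0" using k_def by simp
  define B where "B = b ^ 3"
  have bY: "b ^ Y = b * B ^ k" unfolding Yk B_def by (simp add: power_mult power_add)
  have cZ: "c ^ Z = c ^ z * c ^ (Z - z)" using assms(13) by (simp add: power_add[symmetric])
  have eq: "b * (B ^ k - 1) = c ^ z * (c ^ (Z - z) - 1)"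
    using assms(15,16) bY cZ by (simp add: algebra_simps)
  have cop_zb: "coprime (c ^ z) b" using assms(8) by (simp add: coprime_commute)
  have czB: "c ^ z dvd B ^ k - 1"
  proof -
    have "c ^ z dvd b * (B ^ k - 1)" unfolding eq by simp
    then show ?thesis using cop_zb coprime_dvd_mult_right_iff by blast
  qed
  have cB1: "c dvd B ^ k - 1" using czB assms(10) by (metis dvd_power dvd_trans)
  define P where "P = (\<lambda>e::nat. 0 < e \<and> ([b ^ e = 1] (mod c) \<or> [b ^ e = -1] (mod c)))"
  have pmo: "(LEAST e. P e) = 3" using assms(9) unfolding pm_ord_def P_def by simp
  have ncb: "\<not> c dvd b"
  proof
    assume "c dvd b"
    then have "c dvd gcd b c" by simp
    then have "c dvd 1" using assms(8) by simp
    then show False using c7 by simp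
  qed
  have ferm: "P (nat c - 1)"
  proof -
    have pn: "prime (nat c)" using assms(1) by (simp add: prime_nat_iff_prime)
    have "\<not> nat c dvd nat b"
    proof
      assume "nat c dvd nat b"
      then have "int (nat c) dvd int (nat b)" using int_dvd_int_iff by blast
      then show False using ncb assms(5) c7 by simp
    qed
    from fermat_theorem[OF pn this] have "[nat b ^ (nat c - 1) = 1] (mod nat c)" .
    then have "[int (nat b ^ (nat c - 1)) = int 1] (mod int (nat c))" using cong_int_iff by blast
    then have "[b ^ (nat c - 1) = 1] (mod c)" using assms(5) c7 by simp
    then show ?thesis unfolding P_def using c7 by simp
  qed
  have P3: "P 3" using LeastI[of P, OF ferm] pmo by simp
  have nP1: "\<not> P 1" using not_less_Least[of 1 P] pmo by simp
  have ncb1: "\<not> c dvd b - 1" using nP1 unfolding P_def by (simp add: cong_dvd_iff_int)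
  have cD: "c dvd B - 1"
  proof -
    have "[B = 1] (mod c) \<or> [B = -1] (mod c)" using P3 unfolding P_def B_def by simp
    moreover have "\<not> [B = -1] (mod c)"
    proof
      assume "[B = -1] (mod c)"
      then have "[B ^ k = (-1) ^ k] (mod c)" by (rule cong_pow)
      then have "[B ^ k = -1] (mod c)" using kodd by simp
      moreover have "[B ^ k = 1] (mod c)" using cB1 by (simp add: cong_dvd_iff_int)
      ultimately have "[1 = -1] (mod c)" by (metis cong_sym cong_trans)
      then have "c dvd 2" by (simp add: cong_dvd_iff_int)
      then show False using c7 by (auto dest: zdvd_imp_le)
    qed
    ultimately show ?thesis by (simp add: cong_dvd_iff_int)
  qed
  define D where "D = B - 1"
  have Dpos: "D > 0"
  proof -
    have "b ^ 3 > 1 ^ 3" using assms(5) by (intro power_strict_mono) auto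
    then show ?thesis unfolding D_def B_def by simp
  qed
  have cnu: "\<not> is_unit c" using c7 by simp
  have Dnz: "D \<noteq> 0" using Dpos by simp
  obtain w where w: "D = c ^ multiplicity c D * w" "\<not> c dvd w" using multiplicity_decompose'[OF Dnz cnu] by blast
  define s where "s = multiplicity c D"
  have s1: "s \<ge> 1"
  proof (rule ccontr)
    assume "\<not> s \<ge> 1"
    then have "s = 0" by simp
    then have "D = w" using w s_def by simp
    then show False using w(2) cD D_def by simp
  qed
  have Dsw: "D = c ^ s * w" using w s_def by simp
  have knz: "int k \<noteq> 0" using kpos by simp
  obtain k'' where kk: "int k = c ^ multiplicity c (int k) * k''" "\<not> c dvd k''" using multiplicity_decompose'[OF knz cnu] by blast
  define e where "e = multiplicity c (int k)"
  have kk2: "int k = c ^ e * k''" using kk e_def by simp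
  have k''pos: "k'' > 0"
  proof -
    have "c ^ e > 0" using c7 by simp
    moreover have "int k > 0" using kpos by simp
    ultimately show ?thesis using kk2 by (metis zero_less_mult_pos)
  qed
  define k' where "k' = nat k''"
  have kint: "int k = c ^ e * int k'" using kk2 k''pos k'_def by simp
  have knat: "nat c ^ e * k' = k"
  proof -
    have "int (nat c ^ e * k') = c ^ e * int k'" using c7 by simp
    then show ?thesis using kint by linarith
  qed
  have mainexp: "multiplicity c ((int Y - 1) div 3) = e" using kdiv e_def by simp
  show ?thesis
  proof (cases "z \<le> e")
    case True
    then show ?thesis unfolding mainexp by simp
  next
    case False
    define m where "m = z - e"
    have m1: "m \<ge> 1" and zme: "z = m + e" using False m_def by auto
    have chain: "c ^ (2 * s + e) dvd B ^ k - 1 - int k * D"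
      using lemE[OF assms(1) _ s1, of B e k'] c7 Dsw knat kint unfolding D_def by simp
    have sm: "s \<ge> m"
    proof (rule ccontr)
      assume "\<not> s \<ge> m"
      then have le: "s + e + 1 \<le> z" using zme by simp
      have d1: "c ^ (s + e + 1) dvd B ^ k - 1"
        using czB le_imp_power_dvd[OF le] dvd_trans by blast
      have "s + e + 1 \<le> 2 * s + e" using s1 by simp
      then have d2: "c ^ (s + e + 1) dvd B ^ k - 1 - int k * D"
        using chain le_imp_power_dvd dvd_trans by blast
      have "c ^ (s + e + 1) dvd int k * D"
      proof -
        have "int k * D = (B ^ k - 1) - (B ^ k - 1 - int k * D)" by simp
        then show ?thesis using d1 d2 by (metis dvd_diff)
      qed
      moreover have "int k * D = c ^ (s + e) * (k'' * w)" using kk2 Dsw by (simp add: power_add algebra_simps)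
      ultimately have "c ^ (s + e) * c dvd c ^ (s + e) * (k'' * w)" by simp
      then have "c dvd k'' * w" using c7 by simp
      then show False using kk(2) w(2) assms(1) by (simp add: prime_dvd_mult_iff)
    qed
    define N where "N = b ^ 2 + b + 1"
    have DN: "D = (b - 1) * N" unfolding D_def B_def N_def by (simp add: algebra_simps power2_eq_square power3_eq_cube)
    have cmD: "c ^ m dvd D" using Dsw le_imp_power_dvd[OF sm] by (metis dvd_mult2)
    have cop: "coprime (c ^ m) (b - 1)"
    proof -
      have "coprime c (b - 1)" using assms(1) ncb1 prime_imp_coprime by blast
      then show ?thesis by simp
    qed
    have cmN: "c ^ m dvd N" using cmD cop DN coprime_dvd_mult_right_iff by metis
    have Npos: "N > 0" unfolding N_def using assms(5) by (simp add: add_pos_pos)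
    have NleC: "c ^ m \<le> N" using cmN Npos zdvd_imp_le by blast
    have bb: "b * 2 \<le> b * b" using assms(5) by (intro mult_left_mono) auto
    have Nle: "N \<le> 2 * b ^ 2" unfolding N_def power2_eq_square using assms(5) bb by linarith
    have Z2m: "2 * m \<le> Z"
    proof -
      have "c ^ (2 * m) = (c ^ m) ^ 2" by (simp add: power_mult mult.commute)
      also have "\<dots> \<le> N ^ 2" using NleC c7 by (intro power_mono) auto
      also have "\<dots> \<le> (2 * b ^ 2) ^ 2" using Nle Npos by (intro power_mono) auto
      also have "\<dots> = 4 * b ^ 4" by (simp add: power_mult_distrib power_mult[symmetric])
      also have "\<dots> < c * b ^ 4" using c7 assms(5) by (intro mult_strict_right_mono) auto
      also have "\<dots> \<le> c * b ^ Y" using c7 assms(5) Yq by (intro mult_left_mono power_increasing) auto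
      also have "\<dots> < c * c ^ Z" using c7 assms(4,16) by (intro mult_strict_left_mono) auto
      also have "\<dots> = c ^ (Z + 1)" by simp
      finally have "c ^ (2 * m) < c ^ (Z + 1)" .
      then have "2 * m < Z + 1" using c7 power_strict_increasing_iff[of c "2 * m" "Z + 1"] by linarith
      then show ?thesis by simp
    qed
    define M where "M = c ^ (2 * m)"
    have M1: "M dvd B ^ k - 1 - int k * D"
    proof -
      have "2 * m \<le> 2 * s + e" using sm by simp
      then show ?thesis unfolding M_def using chain le_imp_power_dvd dvd_trans by blast
    qed
    have M2: "M dvd c ^ Z" unfolding M_def using Z2m le_imp_power_dvd by blast
    have E1: "M dvd c ^ z + b * int k * D"
    proof -
      have "b * (B ^ k - 1) = c ^ Z - c ^ z" using eq cZ by (simp add: algebra_simps)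
      then have "c ^ z + b * int k * D = c ^ Z - b * (B ^ k - 1 - int k * D)" by (simp add: algebra_simps)
      then show ?thesis using M1 M2 by simp
    qed
    have M3: "M dvd N ^ 2" unfolding M_def using cmN by (simp add: power_mult mult.commute dvd_power_same)
    have T: "c ^ z * (2 * b + 1) + (int Y - 1) * (b ^ 2 + b + 1)
      = (2 * b + 1) * (c ^ z + b * int k * D) - int k * (2 * b - 3) * N ^ 2"
      unfolding Ym DN N_def by (simp add: algebra_simps power2_eq_square)
    have "M dvd c ^ z * (2 * b + 1) + (int Y - 1) * (b ^ 2 + b + 1)"
      unfolding T using E1 M3 by simp
    then show ?thesis unfolding mainexp M_def m_def cong_0_iff .
  qed
qed

end
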